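(* In a run of Algorithm 1 (described in the context), let $(\mathcal R_k,\delta_k)$ be the open leaf selected at the $k$-th iteration. If the overlap $\gamma$ is positive and the algorithm does not terminate sooner, then there is a $k$ such that $\mathcal R_k\subset\psi\mathbb B+\theta_o$ for some $\theta_o\in\Theta$.
   Context: Problem data: positive integers $p,n,m,d,l$; a convex cone $\mathcal K\subseteq\mathbb R^d$ (a product of convex cones); functions $f,g,h$ on $\mathbb R^p\times\mathbb R^n\times\mathbb R^m$ with values in $\mathbb R,\mathbb R^l,\mathbb R^d$, such that for each fixed $\delta\in\{0,1\}^m$, $(\theta,x)\mapsto f(\theta,x,\delta)$ is jointly convex and $(\theta,x)\mapsto g(\theta,x,\delta),h(\theta,x,\delta)$ are affine. $V^*_\delta(\theta)\in\mathbb R\cup\{+\infty\}$ is the optimal value of: minimize $f(\theta,x,\delta)$ over $x$ s.t. $g(\theta,x,\delta)=0$, $h(\theta,x,\delta)\in\mathcal K$; $\Theta^*_\delta$ is its feasible parameter set; $V^*=\min_\delta V^*_\delta$, $\Theta^*=\bigcup_\delta\Theta^*_\delta$. $\Theta\subseteq\Theta^*$ is a convex full-dimensional polytope, $\epsilon_{\mathrm a},\epsilon_{\mathrm r}$ are tolerances, $\mathbb B$ is the closed Euclidean unit ball. A commutation $\delta$ is $\epsilon$-suboptimal at $\theta$ if $V^*_\delta(\theta)-V^*(\theta)\le\max\{\epsilon_{\mathrm a},\epsilon_{\mathrm r}V^*(\theta)\}$, and in a set if at each of its points. $\Delta=\{\delta:\Theta^*_\delta\cap\Theta\ne\emptyset\}$.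 Overlap $\gamma$: the largest $\gamma\ge0$ such that for every $\theta\in\Theta$ some $\delta\in\Delta$ is $\epsilon$-suboptimal in $(\gamma\mathbb B+\theta)\cap\Theta$. Variability $\sigma_\delta$ of $\delta\in\Delta$: the largest $\sigma>0$ such that for every $\theta_o\in\Theta^*_\delta$, with $\Theta_\sigma=(\sigma\mathbb B+\theta_o)\cap\Theta^*_\delta$, one has $\max_{\Theta_\sigma}V^*_\delta-\min_{\Theta_\sigma}V^*_\delta<\max\{\epsilon_{\mathrm a},\epsilon_{\mathrm r}\min_{\Theta_\sigma}V^*\}$. Condition number $\psi=\min\{\gamma,\min_{\delta\in\Delta}\sigma_\delta\}$. For a simplex $\mathcal R$ with vertices $v_i$ and a commutation $\delta$, $\bar V_\delta(\theta)=\sum_i\alpha_iV^*_\delta(v_i)$ for barycentric coordinates $\alpha$ of $\theta\in\mathcal R$. Let $\mathcal P$ be the set of pairs $(\theta,\delta')$, $\theta\in\mathcal R$, $\delta'\ne\delta$, $\theta\in\Theta^*_{\delta'}$; $\bar e_{\mathrm a}(\mathcal R)=\sup_{\mathcal P}(\bar V_\delta(\theta)-V^*_{\delta'}(\theta))$, $\mu=\min_{\mathcal P}V^*_{\delta'}(\theta)$, $\bar e_{\mathrm r}(\mathcal R)=\bar e_{\mathrm a}(\mathcal R)/\mu$. Problem $D^{\mathcal R}_\delta$: maximize $\epsilon$ over $\theta\in\mathcal R$, $\epsilon\in\mathbb R$, $\delta'\in\{\delta''\ne\delta:\mathcal R\subseteq\Theta^*_{\delta''}\}$, subject to $\bar V_\delta(\theta)-\epsilon\ge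 V^*_{\delta'}(\theta)$ and $\epsilon\ge\max\{\epsilon_{\mathrm a},\epsilon_{\mathrm r}\mu\}$; $\delta^*$ is the $\delta'$-component of a maximizer. SPLIT$(\mathcal R)$: pick vertices $\bar v,\bar v'$ of $\mathcal R$ at maximal distance, $v_{\mathrm{mid}}=(\bar v+\bar v')/2$, return $\mathcal S_1=\mathrm{co}((\mathcal V(\mathcal R)\setminus\{\bar v\})\cup\{v_{\mathrm{mid}}\})$, $\mathcal S_2=\mathrm{co}((\mathcal V(\mathcal R)\setminus\{\bar v'\})\cup\{v_{\mathrm{mid}}\})$. Algorithm 1 (all subproblems solved exactly): Input is a finite binary tree whose leaves $(\mathcal R_i,\delta_i)$ are $p$-simplices with $\mathcal R_i\subseteq\Theta^*_{\delta_i}$ and $\bigcup_i\mathcal R_i=\Theta$; all leaves marked open. While an open leaf exists: take the most recently created open leaf $(\mathcal R,\delta)$ (one iteration). If $\mathcal P=\emptyset$, or $\bar e_{\mathrm a}(\mathcal R)\le\epsilon_{\mathrm a}$, or $\bar e_{\mathrm r}(\mathcal R)\le\epsilon_{\mathrm r}$: close the leaf. Otherwise solve $D^{\mathcal R}_\delta$. If feasible: if $\max_{\mathcal R}V^*_\delta-\min_{\mathcal R}V^*_\delta<\max\{\epsilon_{\mathrm a},\epsilon_{\mathrm r}\min_{\mathcal R}V^*\}$, replace the open leaf by $(\mathcal R,\delta^* )$; else add open children $(\mathcal S_1,\delta^* ),(\mathcal S_2,\delta^* )$ from SPLIT$(\mathcal R)$. If infeasible, add open children $(\mathcal S_1,\delta),(\mathcal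 S_2,\delta)$. *)

theory Defs
  imports "HOL-Analysis.Analysis"
begin

definition affine_map :: "('a::real_vector \<Rightarrow> 'b::real_vector) \<Rightarrow> bool" where
  "affine_map F \<longleftrightarrow> (\<exists>L c. linear L \<and> (\<forall>z. F z = L z + c))"

text \<open>Optimal value V*_delta(theta) (infimum over the empty set is +infinity).\<close>
definition Vopt ::
  "('p \<Rightarrow> 'x \<Rightarrow> 'd \<Rightarrow> real) \<Rightarrow> ('p \<Rightarrow> 'x \<Rightarrow> 'd \<Rightarrow> 'l::zero) \<Rightarrow>
   ('p \<Rightarrow> 'x \<Rightarrow> 'd \<Rightarrow> 'k) \<Rightarrow> 'k set \<Rightarrow> 'd \<Rightarrow> 'p \<Rightarrow> ereal" where
  "Vopt f g h K \<delta> \<theta> = (INF x\<in>{x. g \<theta> x \<delta> = 0 \<and> h \<theta> x \<delta> \<in> K}. ereal (f \<theta> x \<delta>))"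

definition feasset :: "('d \<Rightarrow> 'p \<Rightarrow> ereal) \<Rightarrow> 'd \<Rightarrow> 'p set" where
  "feasset V \<delta> = {\<theta>. V \<delta> \<theta> < \<infinity>}"

definition Vstar :: "('d::finite \<Rightarrow> 'p \<Rightarrow> ereal) \<Rightarrow> 'p \<Rightarrow> ereal" where
  "Vstar V \<theta> = Min (range (\<lambda>\<delta>. V \<delta> \<theta>))"

definition tol :: "real \<Rightarrow> real \<Rightarrow> ereal \<Rightarrow> ereal" where
  "tol ea er v = max (ereal ea) (ereal er * v)"

definition subopt :: "('d::finite \<Rightarrow> 'p \<Rightarrow> ereal) \<Rightarrow> real \<Rightarrow> real \<Rightarrow> 'd \<Rightarrow> 'p \<Rightarrow> bool" where
  "subopt V ea er \<delta> \<theta> \<longleftrightarrow> V \<delta> \<theta> - Vstar V \<theta> \<le> tol ea er (Vstar V \<theta>)"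

definition subopt_on :: "('d::finite \<Rightarrow> 'p \<Rightarrow> ereal) \<Rightarrow> real \<Rightarrow> real \<Rightarrow> 'd \<Rightarrow> 'p set \<Rightarrow> bool" where
  "subopt_on V ea er \<delta> S \<longleftrightarrow> (\<forall>\<theta>\<in>S. subopt V ea er \<delta> \<theta>)"

definition Delta :: "('d \<Rightarrow> 'p \<Rightarrow> ereal) \<Rightarrow> 'p set \<Rightarrow> 'd set" where
  "Delta V \<Theta> = {\<delta>. feasset V \<delta> \<inter> \<Theta> \<noteq> {}}"

definition overlap_prop ::
  "('d::finite \<Rightarrow> 'p::metric_space \<Rightarrow> ereal) \<Rightarrow> real \<Rightarrow> real \<Rightarrow> 'p set \<Rightarrow> real \<Rightarrow> bool" where
  "overlap_prop V ea er \<Theta> \<gamma> \<longleftrightarrow>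
     (\<forall>\<theta>\<in>\<Theta>. \<exists>\<delta>\<in>Delta V \<Theta>. subopt_on V ea er \<delta> (cball \<theta> \<gamma> \<inter> \<Theta>))"

text \<open>The largest such gamma (as a supremum in the extended reals; +infinity if unbounded).\<close>
definition overlap ::
  "('d::finite \<Rightarrow> 'p::metric_space \<Rightarrow> ereal) \<Rightarrow> real \<Rightarrow> real \<Rightarrow> 'p set \<Rightarrow> ereal" where
  "overlap V ea er \<Theta> = Sup (ereal ` {\<gamma>. \<gamma> \<ge> 0 \<and> overlap_prop V ea er \<Theta> \<gamma>})"

definition var_prop ::
  "('d::finite \<Rightarrow> 'p::metric_space \<Rightarrow> ereal) \<Rightarrow> real \<Rightarrow> real \<Rightarrow> 'd \<Rightarrow> real \<Rightarrow> bool" where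
  "var_prop V ea er \<delta> \<sigma> \<longleftrightarrow>
     (\<forall>\<theta>o\<in>feasset V \<delta>. let S = cball \<theta>o \<sigma> \<inter> feasset V \<delta> in
        (SUP \<theta>\<in>S. V \<delta> \<theta>) - (INF \<theta>\<in>S. V \<delta> \<theta>) < tol ea er (INF \<theta>\<in>S. Vstar V \<theta>))"

definition variability ::
  "('d::finite \<Rightarrow> 'p::metric_space \<Rightarrow> ereal) \<Rightarrow> real \<Rightarrow> real \<Rightarrow> 'd \<Rightarrow> ereal" where
  "variability V ea er \<delta> = Sup (ereal ` {\<sigma>. \<sigma> > 0 \<and> var_prop V ea er \<delta> \<sigma>})"

definition condnum ::
  "('d::finite \<Rightarrow> 'p::metric_space \<Rightarrow> ereal) \<Rightarrow> real \<Rightarrow> real \<Rightarrow> 'p set \<Rightarrow> ereal" where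
  "condnum V ea er \<Theta> =
     min (overlap V ea er \<Theta>) (INF \<delta>\<in>Delta V \<Theta>. variability V ea er \<delta>)"

text \<open>Closed ball with extended-real radius (the whole space for radius +infinity).\<close>
definition ecball :: "'p::metric_space \<Rightarrow> ereal \<Rightarrow> 'p set" where
  "ecball c r = {\<theta>. ereal (dist c \<theta>) \<le> r}"

definition bary :: "'p::real_vector set \<Rightarrow> 'p \<Rightarrow> 'p \<Rightarrow> real" where
  "bary Vs \<theta> = (THE \<alpha>. (\<forall>v. v \<notin> Vs \<longrightarrow> \<alpha> v = 0) \<and> (\<forall>v\<in>Vs. \<alpha> v \<ge> 0) \<and>
                       sum \<alpha> Vs = 1 \<and> (\<Sum>v\<in>Vs. \<alpha> v *\<^sub>R v) = \<theta>)"

definition Vbar :: "('d \<Rightarrow> 'p::real_vector \<Rightarrow> ereal) \<Rightarrow> 'd \<Rightarrow> 'p set \<Rightarrow> 'p \<Rightarrow> ereal" where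
  "Vbar V \<delta> Vs \<theta> = (\<Sum>v\<in>Vs. ereal (bary Vs \<theta> v) * V \<delta> v)"

definition Ppairs :: "('d \<Rightarrow> 'p::real_vector \<Rightarrow> ereal) \<Rightarrow> 'd \<Rightarrow> 'p set \<Rightarrow> ('p \<times> 'd) set" where
  "Ppairs V \<delta> Vs = {(\<theta>, \<delta>'). \<theta> \<in> convex hull Vs \<and> \<delta>' \<noteq> \<delta> \<and> \<theta> \<in> feasset V \<delta>'}"

definition ea_bar :: "('d \<Rightarrow> 'p::real_vector \<Rightarrow> ereal) \<Rightarrow> 'd \<Rightarrow> 'p set \<Rightarrow> ereal" where
  "ea_bar V \<delta> Vs = (SUP (\<theta>, \<delta>')\<in>Ppairs V \<delta> Vs. Vbar V \<delta> Vs \<theta> - V \<delta>' \<theta>)"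

definition mu :: "('d \<Rightarrow> 'p::real_vector \<Rightarrow> ereal) \<Rightarrow> 'd \<Rightarrow> 'p set \<Rightarrow> ereal" where
  "mu V \<delta> Vs = (INF (\<theta>, \<delta>')\<in>Ppairs V \<delta> Vs. V \<delta>' \<theta>)"

definition er_bar :: "('d \<Rightarrow> 'p::real_vector \<Rightarrow> ereal) \<Rightarrow> 'd \<Rightarrow> 'p set \<Rightarrow> ereal" where
  "er_bar V \<delta> Vs = ea_bar V \<delta> Vs / mu V \<delta> Vs"

definition closes :: "('d \<Rightarrow> 'p::real_vector \<Rightarrow> ereal) \<Rightarrow> real \<Rightarrow> real \<Rightarrow> 'd \<Rightarrow> 'p set \<Rightarrow> bool" where
  "closes V ea er \<delta> Vs \<longleftrightarrow>
     Ppairs V \<delta> Vs = {} \<or> ea_bar V \<delta> Vs \<le> ereal ea \<or> er_bar V \<delta> Vs \<le> ereal er"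

definition D_feas ::
  "('d \<Rightarrow> 'p::real_vector \<Rightarrow> ereal) \<Rightarrow> real \<Rightarrow> real \<Rightarrow> 'd \<Rightarrow> 'p set \<Rightarrow> 'p \<Rightarrow> real \<Rightarrow> 'd \<Rightarrow> bool" where
  "D_feas V ea er \<delta> Vs \<theta> \<epsilon> \<delta>' \<longleftrightarrow>
     \<theta> \<in> convex hull Vs \<and> \<delta>' \<noteq> \<delta> \<and> convex hull Vs \<subseteq> feasset V \<delta>' \<and>
     Vbar V \<delta> Vs \<theta> - ereal \<epsilon> \<ge> V \<delta>' \<theta> \<and> ereal \<epsilon> \<ge> tol ea er (mu V \<delta> Vs)"

definition D_max ::
  "('d \<Rightarrow> 'p::real_vector \<Rightarrow> ereal) \<Rightarrow> real \<Rightarrow> real \<Rightarrow> 'd \<Rightarrow> 'p set \<Rightarrow> 'p \<Rightarrow> real \<Rightarrow> 'd \<Rightarrow> bool" where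
  "D_max V ea er \<delta> Vs \<theta> \<epsilon> \<delta>' \<longleftrightarrow>
     D_feas V ea er \<delta> Vs \<theta> \<epsilon> \<delta>' \<and>
     (\<forall>\<theta>2 \<epsilon>2 \<delta>2. D_feas V ea er \<delta> Vs \<theta>2 \<epsilon>2 \<delta>2 \<longrightarrow> \<epsilon>2 \<le> \<epsilon>)"

definition small_var ::
  "('d::finite \<Rightarrow> 'p::real_vector \<Rightarrow> ereal) \<Rightarrow> real \<Rightarrow> real \<Rightarrow> 'd \<Rightarrow> 'p set \<Rightarrow> bool" where
  "small_var V ea er \<delta> Vs \<longleftrightarrow>
     (SUP \<theta>\<in>convex hull Vs. V \<delta> \<theta>) - (INF \<theta>\<in>convex hull Vs. V \<delta> \<theta>)
       < tol ea er (INF \<theta>\<in>convex hull Vs. Vstar V \<theta>)"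

definition split_ok :: "'p::real_normed_vector set \<Rightarrow> 'p \<Rightarrow> 'p \<Rightarrow> bool" where
  "split_ok Vs a b \<longleftrightarrow> a \<in> Vs \<and> b \<in> Vs \<and> (\<forall>u\<in>Vs. \<forall>w\<in>Vs. dist u w \<le> dist a b)"

definition split1 :: "'p::real_normed_vector set \<Rightarrow> 'p \<Rightarrow> 'p \<Rightarrow> 'p set" where
  "split1 Vs a b = insert ((1/2) *\<^sub>R (a + b)) (Vs - {a})"

definition split2 :: "'p::real_normed_vector set \<Rightarrow> 'p \<Rightarrow> 'p \<Rightarrow> 'p set" where
  "split2 Vs a b = insert ((1/2) *\<^sub>R (a + b)) (Vs - {b})"

text \<open>A leaf is a simplex (given by its vertex set) together with a commutation.
  The state of the algorithm is the stack of open leaves, the most recently created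
  one on top (head of the list).\<close>
type_synonym ('p, 'd) leaf = "'p set \<times> 'd"

definition push_children :: "'p::real_normed_vector set \<Rightarrow> 'p \<Rightarrow> 'p \<Rightarrow> 'd \<Rightarrow>
    ('p, 'd) leaf list \<Rightarrow> ('p, 'd) leaf list \<Rightarrow> bool" where
  "push_children Vs a b d rest L' \<longleftrightarrow>
     L' = (split1 Vs a b, d) # (split2 Vs a b, d) # rest \<or>
     L' = (split2 Vs a b, d) # (split1 Vs a b, d) # rest"

definition alg_step ::
  "('d::finite \<Rightarrow> 'p::real_normed_vector \<Rightarrow> ereal) \<Rightarrow> real \<Rightarrow> real \<Rightarrow>
   ('p, 'd) leaf list \<Rightarrow> ('p, 'd) leaf list \<Rightarrow> bool" where
  "alg_step V ea er L L' \<longleftrightarrow>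
     (\<exists>Vs \<delta> rest. L = (Vs, \<delta>) # rest \<and>
       ((closes V ea er \<delta> Vs \<and> L' = rest) \<or>
        (\<not> closes V ea er \<delta> Vs \<and> (\<exists>\<theta> \<epsilon> \<delta>'. D_feas V ea er \<delta> Vs \<theta> \<epsilon> \<delta>') \<and>
          (\<exists>\<theta> \<epsilon> \<delta>s. D_max V ea er \<delta> Vs \<theta> \<epsilon> \<delta>s \<and>
             (if small_var V ea er \<delta> Vs then L' = (Vs, \<delta>s) # rest
              else (\<exists>a b. split_ok Vs a b \<and> push_children Vs a b \<delta>s rest L')))) \<or>
        (\<not> closes V ea er \<delta> Vs \<and> \<not> (\<exists>\<theta> \<epsilon> \<delta>'. D_feas V ea er \<delta> Vs \<theta> \<epsilon> \<delta>') \<and>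
          (\<exists>a b. split_ok Vs a b \<and> push_children Vs a b \<delta> rest L'))))"

definition init_ok ::
  "('d \<Rightarrow> 'p::euclidean_space \<Rightarrow> ereal) \<Rightarrow> 'p set \<Rightarrow> ('p, 'd) leaf list \<Rightarrow> bool" where
  "init_ok V \<Theta> L \<longleftrightarrow>
     (\<forall>(Vs, \<delta>)\<in>set L. \<not> affine_dependent Vs \<and> card Vs = DIM('p) + 1 \<and>
        convex hull Vs \<subseteq> feasset V \<delta>) \<and>
     (\<Union>(Vs, \<delta>)\<in>set L. convex hull Vs) = \<Theta>"

end

theory Submission
  imports Defs
begin


lemma mid_dist:
  fixes a b w :: "'a::real_inner"
  shows "(dist ((1/2) *\<^sub>R (a + b)) w)^2 = ((dist a w)^2 + (dist b w)^2)/2 - (dist a b)^2/4"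
proof -
  have e: "(1/2) *\<^sub>R (a + b) - w = (1/2) *\<^sub>R ((a - w) + (b - w))"
    by (simp add: algebra_simps flip: scaleR_add_left)
  have e2: "a - b = (a - w) - (b - w)" by simp
  have c: "b \<bullet> a = a \<bullet> b" by (rule inner_commute)
  show ?thesis unfolding dist_norm e e2
    apply (simp add: power2_norm_eq_inner inner_simps algebra_simps c)
    by (simp add: field_simps)
qed

definition pot_fn :: "nat \<Rightarrow> 'a::metric_space set \<Rightarrow> real" where
  "pot_fn k S = (\<Sum>u\<in>S. \<Sum>w\<in>S. (dist u w)^(2*k))"

lemma phi_insert:
  assumes "finite T" "m \<notin> T" "k \<ge> 1"
  shows "pot_fn k (insert m T) = pot_fn k T + 2 * (\<Sum>w\<in>T. (dist m w)^(2*k))"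
proof -
  have z: "(dist m m)^(2*k) = 0" using assms(3) by simp
  have "pot_fn k (insert m T) = (\<Sum>w\<in>insert m T. (dist m w)^(2*k)) + (\<Sum>u\<in>T. \<Sum>w\<in>insert m T. (dist u w)^(2*k))"
    unfolding pot_fn_def using assms by simp
  also have "\<dots> = (\<Sum>w\<in>T. (dist m w)^(2*k)) + (\<Sum>u\<in>T. (dist u m)^(2*k) + (\<Sum>w\<in>T. (dist u w)^(2*k)))"
    using assms z by simp
  also have "\<dots> = pot_fn k T + 2 * (\<Sum>w\<in>T. (dist m w)^(2*k))"
    unfolding pot_fn_def sum.distrib by (simp add: dist_commute)
  finally show ?thesis .
qed

lemma phi_nonneg: "pot_fn k S \<ge> 0"
  unfolding pot_fn_def by (intro sum_nonneg) auto

lemma phi_split1: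
  fixes Vs :: "'a::real_inner set"
  assumes fin: "finite Vs" and ab: "a \<in> Vs" "b \<in> Vs" "a \<noteq> b"
    and mx: "\<forall>u\<in>Vs. \<forall>w\<in>Vs. dist u w \<le> dist a b" and k: "k \<ge> 1"
    and kc: "real (card Vs - 1) * (3/4)^k \<le> 1/2"
  shows "pot_fn k (split1 Vs a b) \<le> pot_fn k Vs - (dist a b)^(2*k)"
proof -
  define T where "T = Vs - {a}"
  define m where "m = (1/2) *\<^sub>R (a + b)"
  define D where "D = dist a b"
  have finT: "finite T" using fin T_def by simp
  have VsT: "Vs = insert a T" "a \<notin> T" using ab T_def by auto
  have bT: "b \<in> T" using ab T_def by auto
  have cT: "card T = card Vs - 1" using ab fin T_def by simp
  have p1: "pot_fn k Vs = pot_fn k T + 2 * (\<Sum>w\<in>T. (dist a w)^(2*k))"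
    using phi_insert[OF finT VsT(2) k] VsT(1) by simp
  have p2: "(\<Sum>w\<in>T. (dist a w)^(2*k)) \<ge> D^(2*k)"
    using member_le_sum[OF bT, of "\<lambda>w. (dist a w)^(2*k)"] finT D_def by simp
  have mw: "(dist m w)^(2*k) \<le> (3/4)^k * D^(2*k)" if "w \<in> T" for w
  proof -
    have "w \<in> Vs" using that T_def by auto
    then have "dist a w \<le> D" "dist b w \<le> D" using mx ab D_def by auto
    then have "(dist a w)^2 \<le> D^2" "(dist b w)^2 \<le> D^2"
      by (simp_all add: power_mono)
    moreover have "(dist m w)^2 = ((dist a w)^2 + (dist b w)^2)/2 - D^2/4"
      using mid_dist[of a b w] m_def D_def by simp
    ultimately have "(dist m w)^2 \<le> (3/4) * D^2" by (simp add: field_simps)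
    then have "((dist m w)^2)^k \<le> ((3/4) * D^2)^k"
      by (intro power_mono) auto
    then show ?thesis by (simp only: power_mult power_mult_distrib)
  qed
  have s3: "(\<Sum>w\<in>T. (dist m w)^(2*k)) \<le> real (card T) * ((3/4)^k * D^(2*k))"
    using sum_mono[of T _ "\<lambda>_. (3/4)^k * D^(2*k)", OF mw] by simp
  have s4: "real (card T) * ((3/4)^k * D^(2*k)) \<le> (1/2) * D^(2*k)"
    using kc cT mult_right_mono[OF kc, of "D^(2*k)"] by (simp add: mult.assoc)
  have ps: "pot_fn k (split1 Vs a b) \<le> pot_fn k T + 2 * (\<Sum>w\<in>T. (dist m w)^(2*k))"
  proof (cases "m \<in> T")
    case True
    then have "split1 Vs a b = T" unfolding split1_def m_def[symmetric] T_def by auto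
    moreover have "(\<Sum>w\<in>T. (dist m w)^(2*k)) \<ge> 0" by (intro sum_nonneg) auto
    ultimately show ?thesis by simp
  next
    case False
    have "split1 Vs a b = insert m T" unfolding split1_def m_def[symmetric] T_def by auto
    then show ?thesis using phi_insert[OF finT False k] by simp
  qed
  show ?thesis using ps p1 p2 s3 s4 unfolding D_def by linarith
qed




lemma bary_props:
  fixes Vs :: "'a::real_vector set"
  assumes fin: "finite Vs" and ind: "\<not> affine_dependent Vs" and th: "\<theta> \<in> convex hull Vs"
  shows "(\<forall>v\<in>Vs. bary Vs \<theta> v \<ge> 0) \<and> sum (bary Vs \<theta>) Vs = 1"
proof -
  define P where "P = (\<lambda>\<alpha>::'a\<Rightarrow>real. (\<forall>v. v \<notin> Vs \<longrightarrow> \<alpha> v = 0) \<and> (\<forall>v\<in>Vs. \<alpha> v \<ge> 0) \<and>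
                       sum \<alpha> Vs = 1 \<and> (\<Sum>v\<in>Vs. \<alpha> v *\<^sub>R v) = \<theta>)"
  obtain u where u: "\<forall>x\<in>Vs. 0 \<le> u x" "sum u Vs = 1" "(\<Sum>x\<in>Vs. u x *\<^sub>R x) = \<theta>"
    using th convex_hull_finite[OF fin] by auto
  define \<alpha> where "\<alpha> = (\<lambda>v. if v \<in> Vs then u v else 0)"
  have sa: "sum \<alpha> Vs = sum u Vs" "(\<Sum>v\<in>Vs. \<alpha> v *\<^sub>R v) = (\<Sum>v\<in>Vs. u v *\<^sub>R v)"
    unfolding \<alpha>_def by (auto intro: sum.cong)
  have Pa: "P \<alpha>" unfolding P_def using u sa by (auto simp: \<alpha>_def)
  have uniq: "\<beta> = \<alpha>" if "P \<beta>" for \<beta>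
  proof
    fix v
    show "\<beta> v = \<alpha> v"
    proof (rule ccontr)
      assume ne: "\<beta> v \<noteq> \<alpha> v"
      define U where "U = (\<lambda>x. \<beta> x - \<alpha> x)"
      have vV: "v \<in> Vs"
      proof (rule ccontr)
        assume "v \<notin> Vs"
        then have "\<beta> v = 0" "\<alpha> v = 0" using that Pa unfolding P_def by auto
        with ne show False by simp
      qed
      have "sum U Vs = 0" using that Pa unfolding P_def U_def by (simp add: sum_subtractf)
      moreover have "(\<Sum>x\<in>Vs. U x *\<^sub>R x) = 0"
        using that Pa unfolding P_def U_def by (simp add: scaleR_diff_left sum_subtractf)
      moreover have "\<exists>x\<in>Vs. U x \<noteq> 0" using vV ne U_def by auto
      ultimately have "affine_dependent Vs"
        using affine_dependent_explicit_finite[OF fin] by blast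
      then show False using ind by simp
    qed
  qed
  have "P (bary Vs \<theta>)"
    unfolding bary_def P_def[symmetric] using Pa uniq by (metis theI)
  then show ?thesis unfolding P_def by simp
qed

lemma Vbar_le:
  fixes Vs :: "'a::real_vector set"
  assumes fin: "finite Vs" and ind: "\<not> affine_dependent Vs" and th: "\<theta> \<in> convex hull Vs"
    and le: "\<forall>v\<in>Vs. V \<delta> v \<le> ereal A"
  shows "Vbar V \<delta> Vs \<theta> \<le> ereal A"
proof -
  have bp: "\<forall>v\<in>Vs. bary Vs \<theta> v \<ge> 0" "sum (bary Vs \<theta>) Vs = 1"
    using bary_props[OF fin ind th] by auto
  have "Vbar V \<delta> Vs \<theta> \<le> (\<Sum>v\<in>Vs. ereal (bary Vs \<theta> v) * ereal A)"
    unfolding Vbar_def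
    by (intro sum_mono ereal_mult_left_mono) (use bp le in auto)
  also have "\<dots> = ereal (\<Sum>v\<in>Vs. bary Vs \<theta> v * A)" by (simp add: sum_ereal)
  also have "\<dots> = ereal A" using bp by (simp add: sum_distrib_right[symmetric])
  finally show ?thesis .
qed

lemma split1_hull:
  fixes Vs :: "'a::real_normed_vector set"
  assumes "a \<in> Vs" "b \<in> Vs"
  shows "convex hull (split1 Vs a b) \<subseteq> convex hull Vs"
proof -
  have "(1/2) *\<^sub>R (a + b) \<in> convex hull Vs"
  proof -
    have "(1/2) *\<^sub>R a + (1/2) *\<^sub>R b \<in> convex hull Vs"
      using assms by (intro convexD[OF convex_convex_hull]) (auto intro: hull_inc)
    then show ?thesis by (simp add: scaleR_add_right)
  qed
  then have "split1 Vs a b \<subseteq> convex hull Vs" unfolding split1_def using hull_subset by fastforce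
  then show ?thesis by (simp add: hull_minimal)
qed

lemma split1_indep:
  fixes Vs :: "'a::euclidean_space set"
  assumes fin: "finite Vs" and ind: "\<not> affine_dependent Vs" and ab: "a \<in> Vs" "b \<in> Vs"
  shows "\<not> affine_dependent (split1 Vs a b)"
proof (cases "a = b \<or> (1/2) *\<^sub>R (a + b) \<in> Vs - {a}")
  case True
  then have "split1 Vs a b \<subseteq> Vs" unfolding split1_def using ab
    by (auto simp flip: scaleR_add_left)
  then show ?thesis using affine_independent_subset ind by blast
next
  case False
  define m where "m = (1/2) *\<^sub>R (a + b)"
  have mn: "m \<notin> Vs - {a}" "a \<noteq> b" using False m_def by auto
  have S: "split1 Vs a b = insert m (Vs - {a})" unfolding split1_def m_def by simp
  have "card Vs > 0" using fin ab card_gt_0_iff by blast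
  then have cardeq: "card (split1 Vs a b) = card Vs"
    using S mn fin ab by (simp add: card_insert_if)
  have finS: "finite (split1 Vs a b)" using S fin by simp
  have h1: "split1 Vs a b \<subseteq> affine hull Vs"
  proof -
    have "(1/2) *\<^sub>R a + (1/2) *\<^sub>R b \<in> affine hull Vs"
      by (intro mem_affine[OF affine_affine_hull]) (use ab in \<open>auto intro: hull_inc\<close>)
    then have "m \<in> affine hull Vs" by (simp add: m_def scaleR_add_right)
    moreover have "Vs - {a} \<subseteq> affine hull Vs" using hull_subset[of Vs affine] by blast
    ultimately show ?thesis unfolding S by blast
  qed
  have h2: "Vs \<subseteq> affine hull (split1 Vs a b)"
  proof -
    have bS: "b \<in> split1 Vs a b" "m \<in> split1 Vs a b" using S mn ab by auto
    have "a = 2 *\<^sub>R m + (-1) *\<^sub>R b" unfolding m_def by (simp add: algebra_simps)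
    moreover have "2 *\<^sub>R m + (-1) *\<^sub>R b \<in> affine hull (split1 Vs a b)"
      by (intro mem_affine[OF affine_affine_hull]) (use bS in \<open>auto intro: hull_inc\<close>)
    ultimately have "a \<in> affine hull (split1 Vs a b)" by simp
    moreover have "Vs - {a} \<subseteq> affine hull (split1 Vs a b)"
      using S hull_subset[of "split1 Vs a b" affine] by blast
    ultimately show ?thesis by blast
  qed
  have "affine hull (split1 Vs a b) = affine hull Vs"
  proof (rule subset_antisym)
    show "affine hull (split1 Vs a b) \<subseteq> affine hull Vs"
      using h1 by (simp add: hull_minimal affine_affine_hull)
    show "affine hull Vs \<subseteq> affine hull (split1 Vs a b)"
      using h2 by (simp add: hull_minimal affine_affine_hull)
  qed
  then have ad: "aff_dim (split1 Vs a b) = aff_dim Vs" by (metis aff_dim_affine_hull)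
  have "aff_dim Vs = int (card Vs) - 1" using ind affine_independent_iff_card by blast
  then show ?thesis unfolding affine_independent_iff_card using finS cardeq ad by simp
qed




lemma Vstar_le: "Vstar V \<theta> \<le> V \<delta> \<theta>"
  unfolding Vstar_def by (rule Min_le) auto

lemma Vstar_attained: "\<exists>\<delta>. Vstar V \<theta> = V \<delta> \<theta>"
proof -
  have "Vstar V \<theta> \<in> range (\<lambda>\<delta>. V \<delta> \<theta>)" unfolding Vstar_def by (rule Min_in) auto
  then show ?thesis by auto
qed

lemma eps_le_eabar:
  assumes D: "D_feas V ea er \<delta> Vs \<theta> \<epsilon> \<delta>s" and nm: "V \<delta>s \<theta> \<noteq> -\<infinity>"
  shows "ereal \<epsilon> \<le> ea_bar V \<delta> Vs"
proof -
  have th: "\<theta> \<in> convex hull Vs" "\<delta>s \<noteq> \<delta>" "convex hull Vs \<subseteq> feasset V \<delta>s"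
    "V \<delta>s \<theta> \<le> Vbar V \<delta> Vs \<theta> - ereal \<epsilon>"
    using D unfolding D_feas_def by auto
  then have fin: "V \<delta>s \<theta> < \<infinity>" unfolding feasset_def by auto
  have P: "(\<theta>, \<delta>s) \<in> Ppairs V \<delta> Vs" unfolding Ppairs_def using th fin feasset_def by auto
  have "ereal \<epsilon> \<le> Vbar V \<delta> Vs \<theta> - V \<delta>s \<theta>"
    using th(4) fin nm
    by (cases "Vbar V \<delta> Vs \<theta>"; cases "V \<delta>s \<theta>") auto
  also have "\<dots> \<le> ea_bar V \<delta> Vs"
    unfolding ea_bar_def using P by (auto intro!: SUP_upper2[OF P])
  finally show ?thesis .
qed

lemma mu_nonneg:
  assumes er: "er < 0" and nc: "\<not> closes V ea er \<delta> Vs"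
    and D: "D_feas V ea er \<delta> Vs \<theta> \<epsilon> \<delta>s" and nm: "V \<delta>s \<theta> \<noteq> -\<infinity>"
  shows "mu V \<delta> Vs \<ge> 0"
proof (rule ccontr)
  assume "\<not> mu V \<delta> Vs \<ge> 0"
  then have neg: "mu V \<delta> Vs < 0" by simp
  have e1: "ereal \<epsilon> \<le> ea_bar V \<delta> Vs" by (rule eps_le_eabar[OF D nm])
  have e2: "ereal er * mu V \<delta> Vs \<le> ereal \<epsilon>"
    using D unfolding D_feas_def tol_def by auto
  have e3: "ea_bar V \<delta> Vs / mu V \<delta> Vs > ereal er"
    using nc unfolding closes_def er_bar_def by auto
  show False
  proof (cases "mu V \<delta> Vs")
    case (real m)
    then have m: "m < 0" using neg by simp
    have "ereal er * ereal m \<le> ereal \<epsilon>" using e2 real by simp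
    then have "ereal er * ereal m \<le> ea_bar V \<delta> Vs" using e1 by (rule order_trans)
    moreover have "ea_bar V \<delta> Vs / ereal m > ereal er" using e3 real by simp
    ultimately show False using m er
    proof (cases "ea_bar V \<delta> Vs")
      case (real e)
      then have "er * m \<le> e" "e / m > er"
        using \<open>ereal er * ereal m \<le> ea_bar V \<delta> Vs\<close> \<open>ea_bar V \<delta> Vs / ereal m > ereal er\<close> m
        by (auto simp: divide_ereal_def divide_inverse)
      then show False using m by (simp add: field_simps)
    next
      case PInf
      then show False using \<open>ea_bar V \<delta> Vs / ereal m > ereal er\<close> m
        by (simp add: divide_ereal_def)
    next
      case MInf
      then show False using \<open>ereal er * ereal m \<le> ea_bar V \<delta> Vs\<close> by simp
    qed
  next
    case PInf
    then show False using neg by simp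
  next
    case MInf
    then show False using e2 er by simp
  qed
qed




lemma small_var_fin:
  assumes ne: "convex hull Vs \<noteq> {}"
    and fv: "\<forall>x\<in>convex hull Vs. V \<delta> x \<noteq> \<infinity> \<and> V \<delta> x \<noteq> -\<infinity>"
    and sv: "small_var V ea er \<delta> Vs"
  shows "\<exists>a i. (SUP x\<in>convex hull Vs. V \<delta> x) = ereal a \<and> (INF x\<in>convex hull Vs. V \<delta> x) = ereal i
     \<and> i \<le> a \<and> ereal (a - i) < tol ea er (INF x\<in>convex hull Vs. Vstar V x)"
proof -
  obtain y where y: "y \<in> convex hull Vs" using ne by blast
  let ?S = "(SUP x\<in>convex hull Vs. V \<delta> x)" and ?I = "(INF x\<in>convex hull Vs. V \<delta> x)"
  have lt: "?S - ?I < tol ea er (INF x\<in>convex hull Vs. Vstar V x)"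
    using sv unfolding small_var_def .
  have SI: "?I \<le> V \<delta> y" "V \<delta> y \<le> ?S" using y by (auto intro: INF_lower SUP_upper)
  have Sm: "?S \<noteq> -\<infinity>" using SI fv y by auto
  have Ip: "?I \<noteq> \<infinity>" using SI fv y by auto
  have Sp: "?S \<noteq> \<infinity>" using lt Ip by auto
  have Im: "?I \<noteq> -\<infinity>" using lt Sm by auto
  obtain a where a: "?S = ereal a" using Sm Sp by (cases ?S) auto
  obtain i where i: "?I = ereal i" using Im Ip by (cases ?I) auto
  have "i \<le> a" using SI a i by (metis ereal_less_eq(3) order_trans)
  then show ?thesis using a i lt by auto
qed

lemma chain:
  fixes V :: "'d::finite \<Rightarrow> 'a::real_vector \<Rightarrow> ereal"
  assumes nminf: "\<forall>\<delta> \<theta>. V \<delta> \<theta> \<noteq> -\<infinity>"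
    and fin: "finite Vs" and ind: "\<not> affine_dependent Vs" and ne: "Vs \<noteq> {}"
    and feas: "convex hull Vs \<subseteq> feasset V \<delta>"
    and nc1: "\<not> closes V ea er \<delta> Vs" and D1: "D_feas V ea er \<delta> Vs \<theta> \<epsilon> \<delta>s"
    and sv1: "small_var V ea er \<delta> Vs"
    and nc2: "\<not> closes V ea er \<delta>s Vs" and D2: "D_feas V ea er \<delta>s Vs \<theta>' \<epsilon>' \<delta>t"
    and sv2: "small_var V ea er \<delta>s Vs"
  shows "(SUP x\<in>convex hull Vs. V \<delta>s x) < (SUP x\<in>convex hull Vs. V \<delta> x)"
proof -
  let ?H = "convex hull Vs"
  have neH: "?H \<noteq> {}" using ne by simp
  have d1: "\<theta> \<in> ?H" "\<delta>s \<noteq> \<delta>" "?H \<subseteq> feasset V \<delta>s"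
    "V \<delta>s \<theta> \<le> Vbar V \<delta> Vs \<theta> - ereal \<epsilon>" "ereal \<epsilon> \<ge> tol ea er (mu V \<delta> Vs)"
    using D1 unfolding D_feas_def by auto
  have d2: "\<theta>' \<in> ?H" "?H \<subseteq> feasset V \<delta>t"
    using D2 unfolding D_feas_def by auto
  have fv1: "\<forall>x\<in>?H. V \<delta> x \<noteq> \<infinity> \<and> V \<delta> x \<noteq> -\<infinity>" using feas nminf unfolding feasset_def by auto
  have fv2: "\<forall>x\<in>?H. V \<delta>s x \<noteq> \<infinity> \<and> V \<delta>s x \<noteq> -\<infinity>" using d1(3) nminf unfolding feasset_def by auto
  obtain A i1 where A: "(SUP x\<in>?H. V \<delta> x) = ereal A"
    using small_var_fin[OF neH fv1 sv1] by auto
  obtain B I where B: "(SUP x\<in>?H. V \<delta>s x) = ereal B" "(INF x\<in>?H. V \<delta>s x) = ereal I"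
     "I \<le> B" "ereal (B - I) < tol ea er (INF x\<in>?H. Vstar V x)"
    using small_var_fin[OF neH fv2 sv2] by blast
  let ?M = "(INF x\<in>?H. Vstar V x)"
  have Mmu: "?M \<le> mu V \<delta> Vs"
    unfolding mu_def
  proof (rule INF_greatest)
    fix p assume "p \<in> Ppairs V \<delta> Vs"
    then obtain x d where p: "p = (x, d)" "x \<in> ?H" unfolding Ppairs_def by auto
    have "?M \<le> Vstar V x" using p(2) by (rule INF_lower)
    also have "\<dots> \<le> V d x" by (rule Vstar_le)
    finally show "?M \<le> (case p of (\<theta>, \<delta>') \<Rightarrow> V \<delta>' \<theta>)" using p by simp
  qed
  have tolle: "tol ea er ?M \<le> tol ea er (mu V \<delta> Vs)"
  proof (cases "er \<ge> 0")
    case True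
    then have "ereal er * ?M \<le> ereal er * mu V \<delta> Vs"
      using Mmu by (intro ereal_mult_left_mono) auto
    then show ?thesis unfolding tol_def by (rule max.mono[OF order_refl])
  next
    case False
    then have er: "er < 0" by simp
    have mu1: "mu V \<delta> Vs \<ge> 0" using mu_nonneg[OF er nc1 D1] nminf by auto
    have mu2: "mu V \<delta>s Vs \<ge> 0" using mu_nonneg[OF er nc2 D2] nminf by auto
    have M0: "?M \<ge> 0"
    proof (rule INF_greatest)
      fix x assume x: "x \<in> ?H"
      obtain d where d: "Vstar V x = V d x" using Vstar_attained[of V x] by blast
      show "0 \<le> Vstar V x"
      proof (cases "d = \<delta>")
        case True
        have "(x, \<delta>) \<in> Ppairs V \<delta>s Vs" unfolding Ppairs_def using x feas d1(2) by auto
        then have "mu V \<delta>s Vs \<le> V \<delta> x" unfolding mu_def by (auto intro: INF_lower2)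
        then show ?thesis using mu2 d True by simp
      next
        case False
        have "V d x < \<infinity>" using d Vstar_le[of V x \<delta>] fv1 x by (metis less_ereal.simps(2) ereal_infty_less_eq(1) not_less order.not_eq_order_implies_strict)
        then have "(x, d) \<in> Ppairs V \<delta> Vs" unfolding Ppairs_def feasset_def using x False by auto
        then have "mu V \<delta> Vs \<le> V d x" unfolding mu_def by (auto intro: INF_lower2)
        then show ?thesis using mu1 d by simp
      qed
    qed
    have erM: "ereal er * ?M \<le> 0" using M0 er
      by (cases ?M) (auto simp: mult_nonneg_nonpos2)
    have "(0::ereal) \<le> ereal (B - I)" using B(3) by simp
    then have "tol ea er ?M > 0" using B(4) by (rule order.strict_trans1)
    then have "ereal ea > 0" using erM unfolding tol_def by (auto simp: max_def split: if_splits)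
    then have "ereal er * ?M < ereal ea" using order.strict_trans1[OF erM] by blast
    then have "tol ea er ?M = ereal ea" unfolding tol_def by (auto simp: max_def)
    then show ?thesis unfolding tol_def by simp
  qed
  have "Vbar V \<delta> Vs \<theta> \<le> ereal A"
    using Vbar_le[OF fin ind d1(1)] A hull_subset[of Vs convex]
    by (metis SUP_upper subsetD)
  then have vth: "V \<delta>s \<theta> \<le> ereal (A - \<epsilon>)"
    using d1(4) by (metis ereal_minus(1) ereal_minus_mono order_refl order_trans)
  have "(INF x\<in>?H. V \<delta>s x) \<le> V \<delta>s \<theta>" using d1(1) by (rule INF_lower)
  then have "I \<le> A - \<epsilon>" using vth B(2) by (metis ereal_less_eq(3) order_trans)
  moreover have "B - I < \<epsilon>" using B(4) tolle d1(5) by (metis ereal_less_eq(3) less_ereal.simps(1) order.strict_trans2 order_trans)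
  ultimately have "B < A" by linarith
  then show ?thesis using A B by simp
qed




definition leaf_ok :: "'p::euclidean_space set \<Rightarrow> ('d \<Rightarrow> 'p \<Rightarrow> ereal) \<Rightarrow> ('p, 'd) leaf \<Rightarrow> bool" where
  "leaf_ok \<Theta> V l \<longleftrightarrow> finite (fst l) \<and> fst l \<noteq> {} \<and> \<not> affine_dependent (fst l) \<and>
      convex hull (fst l) \<subseteq> \<Theta> \<and> convex hull (fst l) \<subseteq> feasset V (snd l)"

definition InvL :: "'p::euclidean_space set \<Rightarrow> ('d \<Rightarrow> 'p \<Rightarrow> ereal) \<Rightarrow> ('p, 'd) leaf list \<Rightarrow> bool" where
  "InvL \<Theta> V L \<longleftrightarrow> (\<forall>l\<in>set L. leaf_ok \<Theta> V l)"

lemma split2_eq: "split2 Vs a b = split1 Vs b a"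
  unfolding split1_def split2_def by (simp add: add.commute)

lemma split_ok_sym: "split_ok Vs a b \<Longrightarrow> split_ok Vs b a"
  unfolding split_ok_def by (simp add: dist_commute)

lemma inv_init:
  fixes V :: "'d \<Rightarrow> 'p::euclidean_space \<Rightarrow> ereal"
  assumes "init_ok V \<Theta> L"
  shows "InvL \<Theta> V L"
  unfolding InvL_def
proof
  fix l assume l: "l \<in> set L"
  show "leaf_ok \<Theta> V l" unfolding leaf_ok_def
  proof -
  obtain Vs d where ld: "l = (Vs, d)" by (cases l)
  have c: "\<not> affine_dependent Vs" "card Vs = DIM('p) + 1" "convex hull Vs \<subseteq> feasset V d"
    using assms l ld unfolding init_ok_def by auto
  have "convex hull Vs \<subseteq> \<Theta>" using assms l ld unfolding init_ok_def by blast
  moreover have "finite Vs" "Vs \<noteq> {}" using c(2) card_gt_0_iff by fastforce+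
  ultimately show "finite (fst l) \<and> fst l \<noteq> {} \<and> \<not> affine_dependent (fst l) \<and>
      convex hull (fst l) \<subseteq> \<Theta> \<and> convex hull (fst l) \<subseteq> feasset V (snd l)"
    using c ld by simp
  qed
qed

lemma child_ok:
  fixes Vs :: "'p::euclidean_space set"
  assumes "finite Vs" "Vs \<noteq> {}" "\<not> affine_dependent Vs" "convex hull Vs \<subseteq> \<Theta>"
    and "convex hull Vs \<subseteq> feasset V d" and ab: "a \<in> Vs" "b \<in> Vs"
  shows "finite (split1 Vs a b) \<and> split1 Vs a b \<noteq> {} \<and> \<not> affine_dependent (split1 Vs a b) \<and>
      convex hull (split1 Vs a b) \<subseteq> \<Theta> \<and> convex hull (split1 Vs a b) \<subseteq> feasset V d"
  using assms split1_hull[OF ab] split1_indep[OF assms(1,3) ab]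
  unfolding split1_def by auto

lemma inv_step:
  fixes V :: "'d::finite \<Rightarrow> 'p::euclidean_space \<Rightarrow> ereal"
  assumes I: "InvL \<Theta> V L" and st: "alg_step V ea er L L'"
  shows "InvL \<Theta> V L'"
proof -
  obtain Vs \<delta> rest where L: "L = (Vs, \<delta>) # rest" using st unfolding alg_step_def by auto
  have hd: "finite Vs" "Vs \<noteq> {}" "\<not> affine_dependent Vs" "convex hull Vs \<subseteq> \<Theta>"
      "convex hull Vs \<subseteq> feasset V \<delta>" using I L unfolding InvL_def leaf_ok_def by auto
  have IR: "InvL \<Theta> V rest" using I L unfolding InvL_def by auto
  have push: "InvL \<Theta> V L''" if pc: "push_children Vs a b d rest L''" and sok: "split_ok Vs a b"
     and fd: "convex hull Vs \<subseteq> feasset V d" for a b d L''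
  proof -
    have ab: "a \<in> Vs" "b \<in> Vs" using sok unfolding split_ok_def by auto
    have c1: "leaf_ok \<Theta> V (split1 Vs a b, d)"
      using child_ok[OF hd(1-4) fd ab] unfolding leaf_ok_def by simp
    have c2: "leaf_ok \<Theta> V (split2 Vs a b, d)"
      unfolding split2_eq using child_ok[OF hd(1-4) fd ab(2,1)] unfolding leaf_ok_def by simp
    show ?thesis using pc c1 c2 IR unfolding push_children_def InvL_def by auto
  qed
  from st L show ?thesis unfolding alg_step_def
  proof (elim exE conjE disjE)
    fix Vs' \<delta>' rest'
    assume "L = (Vs', \<delta>') # rest'" "closes V ea er \<delta>' Vs'" "L' = rest'"
    then show ?thesis using IR L by simp
  next
    fix Vs' \<delta>' rest' \<theta> \<epsilon> \<delta>s
    assume e: "L = (Vs', \<delta>') # rest'" and Dm: "D_max V ea er \<delta>' Vs' \<theta> \<epsilon> \<delta>s"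
      and c: "if small_var V ea er \<delta>' Vs' then L' = (Vs', \<delta>s) # rest'
              else (\<exists>a b. split_ok Vs' a b \<and> push_children Vs' a b \<delta>s rest' L')"
    have ee: "Vs' = Vs" "\<delta>' = \<delta>" "rest' = rest" using e L by auto
    have fs: "convex hull Vs \<subseteq> feasset V \<delta>s" using Dm ee unfolding D_max_def D_feas_def by auto
    show ?thesis
    proof (cases "small_var V ea er \<delta>' Vs'")
      case True
      then have "L' = (Vs, \<delta>s) # rest" using c ee by simp
      then show ?thesis using IR hd fs unfolding InvL_def leaf_ok_def by auto
    next
      case False
      then obtain a b where "split_ok Vs a b" "push_children Vs a b \<delta>s rest L'" using c ee by auto
      then show ?thesis using push fs by blast
    qed
  next
    fix Vs' \<delta>' rest' a b
    assume e: "L = (Vs', \<delta>') # rest'" "split_ok Vs' a b" "push_children Vs' a b \<delta>' rest' L'"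
    have ee: "Vs' = Vs" "\<delta>' = \<delta>" "rest' = rest" using e L by auto
    show ?thesis using push[of a b \<delta> L'] e ee hd(5) by simp
  qed
qed




definition lrank :: "real \<Rightarrow> nat \<Rightarrow> 'a::metric_space set \<Rightarrow> nat" where
  "lrank c k S = nat \<lceil>pot_fn k S / c\<rceil>"

definition stack_pot :: "real \<Rightarrow> nat \<Rightarrow> ('a::metric_space, 'd) leaf list \<Rightarrow> nat" where
  "stack_pot c k L = sum_list (map (\<lambda>l. 3 ^ lrank c k (fst l)) L)"

definition Repl where
  "Repl V ea er L L' \<longleftrightarrow> (\<exists>Vs \<delta> rest \<theta> \<epsilon> \<delta>s. L = (Vs, \<delta>) # rest \<and> \<not> closes V ea er \<delta> Vs \<and>
     D_feas V ea er \<delta> Vs \<theta> \<epsilon> \<delta>s \<and> small_var V ea er \<delta> Vs \<and> L' = (Vs, \<delta>s) # rest)"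

lemma rank_dec:
  assumes c: "c > 0" and le: "pot_fn k S' \<le> pot_fn k S - c"
  shows "lrank c k S' < lrank c k S"
proof -
  have x0: "pot_fn k S' / c \<ge> 0" using phi_nonneg[of k S'] c by simp
  have xy: "pot_fn k S' / c \<le> pot_fn k S / c - 1" using le c by (simp add: field_simps)
  have "\<lceil>pot_fn k S' / c\<rceil> \<le> \<lceil>pot_fn k S / c - 1\<rceil>" using xy by (rule ceiling_mono)
  also have "\<dots> = \<lceil>pot_fn k S / c\<rceil> - 1" by simp
  finally have "\<lceil>pot_fn k S' / c\<rceil> < \<lceil>pot_fn k S / c\<rceil>" by simp
  moreover have "\<lceil>pot_fn k S' / c\<rceil> \<ge> 0" using x0 by simp
  ultimately show ?thesis unfolding lrank_def by linarith
qed

lemma card_le_DIM: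
  fixes S :: "'p::euclidean_space set"
  assumes "\<not> affine_dependent S"
  shows "card S \<le> DIM('p) + 1"
proof -
  have "aff_dim S = int (card S) - 1" using assms affine_independent_iff_card by blast
  moreover have "aff_dim S \<le> int DIM('p)" by (rule aff_dim_le_DIM)
  ultimately show ?thesis by linarith
qed

lemma split_rank:
  fixes Vs :: "'p::euclidean_space set"
  assumes lo: "leaf_ok \<Theta> V (Vs, \<delta>)" and sok: "split_ok Vs a b" and big: "\<psi> < dist a b"
    and psi: "\<psi> > 0" and k: "k \<ge> 1" and kc: "real DIM('p) * (3/4)^k \<le> 1/2"
  shows "lrank (\<psi>^(2*k)) k (split1 Vs a b) < lrank (\<psi>^(2*k)) k Vs \<and>
         lrank (\<psi>^(2*k)) k (split2 Vs a b) < lrank (\<psi>^(2*k)) k Vs"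
proof -
  have fin: "finite Vs" and ind: "\<not> affine_dependent Vs" using lo unfolding leaf_ok_def by auto
  have ab0: "a \<in> Vs" "b \<in> Vs" using sok unfolding split_ok_def by auto
  have "a \<noteq> b" proof assume "a = b" then show False using big psi by simp qed
  note ab = ab0 this
  have mx: "\<forall>u\<in>Vs. \<forall>w\<in>Vs. dist u w \<le> dist a b" using sok unfolding split_ok_def by auto
  have dba: "dist b a = dist a b" by (rule dist_commute)
  have mx2: "\<forall>u\<in>Vs. \<forall>w\<in>Vs. dist u w \<le> dist b a" using mx unfolding dba .
  have "card Vs - 1 \<le> DIM('p)" using card_le_DIM[OF ind] by simp
  then have "real (card Vs - 1) * (3/4)^k \<le> real DIM('p) * (3/4)^k"
    by (intro mult_right_mono) auto
  then have kc': "real (card Vs - 1) * (3/4)^k \<le> 1/2" using kc by linarith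
  have pp: "\<psi>^(2*k) \<le> (dist a b)^(2*k)" using big psi by (intro power_mono) auto
  have c: "\<psi>^(2*k) > 0" using psi by simp
  have "pot_fn k (split1 Vs a b) \<le> pot_fn k Vs - (dist a b)^(2*k)"
    by (rule phi_split1[OF fin ab mx k kc'])
  then have r1: "lrank (\<psi>^(2*k)) k (split1 Vs a b) < lrank (\<psi>^(2*k)) k Vs"
    using pp by (intro rank_dec[OF c]) linarith
  have "pot_fn k (split1 Vs b a) \<le> pot_fn k Vs - (dist b a)^(2*k)"
    using phi_split1[OF fin ab(2) ab(1) _ mx2 k kc'] ab(3) by auto
  then have "pot_fn k (split1 Vs b a) \<le> pot_fn k Vs - (dist a b)^(2*k)" unfolding dba .
  then have r2: "lrank (\<psi>^(2*k)) k (split2 Vs a b) < lrank (\<psi>^(2*k)) k Vs"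
    unfolding split2_eq using pp by (intro rank_dec[OF c]) linarith
  show ?thesis using r1 r2 by simp
qed

lemma pow3_lemma:
  fixes r1 r2 r :: nat
  assumes "r1 < r" "r2 < r"
  shows "(3::nat)^r1 + 3^r2 < 3^r"
proof -
  obtain q where q: "r = Suc q" using assms by (cases r) auto
  have a: "(3::nat)^r1 \<le> 3^q" "(3::nat)^r2 \<le> 3^q" using assms q by (auto intro: power_increasing)
  have b: "(3::nat)^q > 0" by simp
  have "(3::nat)^r = 3 * 3^q" using q by simp
  then show ?thesis using a b by linarith
qed

lemma step_class:
  fixes V :: "'d::finite \<Rightarrow> 'p::euclidean_space \<Rightarrow> ereal"
  assumes I: "InvL \<Theta> V L" and st: "alg_step V ea er L L'"
    and big: "\<forall>a b. split_ok (fst (hd L)) a b \<longrightarrow> \<psi> < dist a b"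
    and psi: "\<psi> > 0" and k: "k \<ge> 1" and kc: "real DIM('p) * (3/4)^k \<le> 1/2"
  shows "stack_pot (\<psi>^(2*k)) k L' < stack_pot (\<psi>^(2*k)) k L \<or> Repl V ea er L L'"
proof -
  let ?c = "\<psi>^(2*k)"
  obtain Vs \<delta> rest where L: "L = (Vs, \<delta>) # rest" using st unfolding alg_step_def by auto
  have lo: "leaf_ok \<Theta> V (Vs, \<delta>)" using I L unfolding InvL_def by auto
  have PL: "stack_pot ?c k L = 3 ^ lrank ?c k Vs + stack_pot ?c k rest" using L unfolding stack_pot_def by simp
  have push: "stack_pot ?c k L'' < stack_pot ?c k L" if pc: "push_children Vs a b d rest L''"
    and sok: "split_ok Vs a b" for a b d L''
  proof -
    have "\<psi> < dist a b" using big sok L by simp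
    then have r: "lrank ?c k (split1 Vs a b) < lrank ?c k Vs" "lrank ?c k (split2 Vs a b) < lrank ?c k Vs"
      using split_rank[OF lo sok _ psi k kc] by auto
    have "(3::nat) ^ lrank ?c k (split1 Vs a b) + 3 ^ lrank ?c k (split2 Vs a b) < 3 ^ lrank ?c k Vs"
      using pow3_lemma[OF r] .
    moreover have "stack_pot ?c k L'' = 3 ^ lrank ?c k (split1 Vs a b) + 3 ^ lrank ?c k (split2 Vs a b) + stack_pot ?c k rest"
      using pc unfolding push_children_def stack_pot_def by (elim disjE) simp_all
    ultimately show ?thesis using PL by linarith
  qed
  from st L show ?thesis unfolding alg_step_def
  proof (elim exE conjE disjE)
    fix Vs' \<delta>' rest'
    assume "L = (Vs', \<delta>') # rest'" "closes V ea er \<delta>' Vs'" "L' = rest'"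
    then have "stack_pot ?c k L' = stack_pot ?c k rest" using L by simp
    then show ?thesis using PL by simp
  next
    fix Vs' \<delta>' rest' \<theta> \<epsilon> \<delta>s
    assume e: "L = (Vs', \<delta>') # rest'" and Dm: "D_max V ea er \<delta>' Vs' \<theta> \<epsilon> \<delta>s"
      and nc: "\<not> closes V ea er \<delta>' Vs'"
      and c: "if small_var V ea er \<delta>' Vs' then L' = (Vs', \<delta>s) # rest'
              else (\<exists>a b. split_ok Vs' a b \<and> push_children Vs' a b \<delta>s rest' L')"
    have ee: "Vs' = Vs" "\<delta>' = \<delta>" "rest' = rest" using e L by auto
    show ?thesis
    proof (cases "small_var V ea er \<delta>' Vs'")
      case True
      then have "L' = (Vs, \<delta>s) # rest" using c ee by simp
      moreover have "D_feas V ea er \<delta> Vs \<theta> \<epsilon> \<delta>s" using Dm ee unfolding D_max_def by simp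
      ultimately have "Repl V ea er L L'" unfolding Repl_def using L ee nc True
        by (intro exI[of _ Vs] exI[of _ \<delta>] exI[of _ rest] exI[of _ \<theta>] exI[of _ \<epsilon>] exI[of _ \<delta>s]) simp
      then show ?thesis by simp
    next
      case False
      then obtain a b where "split_ok Vs a b" "push_children Vs a b \<delta>s rest L'" using c ee by auto
      then show ?thesis using push by blast
    qed
  next
    fix Vs' \<delta>' rest' a b
    assume e: "L = (Vs', \<delta>') # rest'" "split_ok Vs' a b" "push_children Vs' a b \<delta>' rest' L'"
    have ee: "Vs' = Vs" "\<delta>' = \<delta>" "rest' = rest" using e L by auto
    have "stack_pot ?c k L' < stack_pot ?c k L" using push[of a b \<delta> L'] e ee by simp
    then show ?thesis by simp
  qed
qed

lemma Rep_Phi: "Repl V ea er L L' \<Longrightarrow> stack_pot c k L' = stack_pot c k L"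
  unfolding Repl_def stack_pot_def by auto




lemma condnum_pos:
  fixes V :: "'d::finite \<Rightarrow> 'p::euclidean_space \<Rightarrow> ereal"
  assumes ov: "overlap V ea er \<Theta> > 0"
    and ve: "\<forall>\<delta>\<in>Delta V \<Theta>. \<exists>\<sigma>>0. var_prop V ea er \<delta> \<sigma>"
  shows "condnum V ea er \<Theta> > 0"
proof -
  have vpos: "variability V ea er \<delta> > 0" if dD: "\<delta> \<in> Delta V \<Theta>" for \<delta>
  proof -
    have ex: "\<exists>\<sigma>>0. var_prop V ea er \<delta> \<sigma>" using bspec[OF ve dD] .
    then obtain \<sigma> where s1: "\<sigma> > 0" and s2: "var_prop V ea er \<delta> \<sigma>" by (elim exE conjE)
    have "ereal \<sigma> \<in> ereal ` {\<sigma>. \<sigma> > 0 \<and> var_prop V ea er \<delta> \<sigma>}" using s1 s2 by blast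
    then have "ereal \<sigma> \<le> variability V ea er \<delta>" unfolding variability_def by (rule Sup_upper)
    moreover have "0 < ereal \<sigma>" using s1 by simp
    ultimately show ?thesis by (rule order.strict_trans2[rotated])
  qed
  have "(INF \<delta>\<in>Delta V \<Theta>. variability V ea er \<delta>) > 0"
  proof (cases "Delta V \<Theta> = {}")
    case True
    then show ?thesis by (simp add: top_ereal_def)
  next
    case False
    have fin: "finite (variability V ea er ` Delta V \<Theta>)" by simp
    have ne: "variability V ea er ` Delta V \<Theta> \<noteq> {}" using False by blast
    have "\<forall>x\<in>variability V ea er ` Delta V \<Theta>. 0 < x" using vpos by blast
    then show ?thesis using finite_less_Inf_iff[OF fin ne] by blast
  qed
  then show ?thesis using ov unfolding condnum_def by simp
qed

lemma dec_less:
  fixes h :: "nat \<Rightarrow> 'a::order"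
  assumes "\<And>i. h (Suc i) < h i"
  shows "i < j \<Longrightarrow> h j < h i"
proof (induction j)
  case 0
  then show ?case by simp
next
  case (Suc j)
  then show ?case using assms[of j] by (metis less_Suc_eq order.strict_trans)
qed

lemma main_gen:
  fixes V :: "'d::finite \<Rightarrow> 'p::euclidean_space \<Rightarrow> ereal"
    and s :: "nat \<Rightarrow> ('p, 'd) leaf list"
  assumes nminf: "\<forall>\<delta> \<theta>. V \<delta> \<theta> \<noteq> -\<infinity>"
    and psi: "condnum V ea er \<Theta> > 0"
    and init: "init_ok V \<Theta> (s 0)"
    and step: "\<forall>k. alg_step V ea er (s k) (s (Suc k))"
  shows "\<exists>k \<theta>o. \<theta>o \<in> \<Theta> \<and> convex hull (fst (hd (s k))) \<subseteq> ecball \<theta>o (condnum V ea er \<Theta>)"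
proof (rule ccontr)
  assume H: "\<not> ?thesis"
  let ?\<psi> = "condnum V ea er \<Theta>"
  obtain \<psi>' where p1: "\<psi>' > 0" and p2: "ereal \<psi>' \<le> ?\<psi>"
  proof (cases ?\<psi>)
    case (real r)
    then show ?thesis using that[of r] psi by simp
  next
    case PInf
    then show ?thesis using that[of 1] by simp
  next
    case MInf
    then show ?thesis using psi by simp
  qed
  have InvL: "InvL \<Theta> V (s j)" for j
  proof (induction j)
    case 0
    then show ?case using inv_init[OF init] .
  next
    case (Suc j)
    then show ?case using inv_step step by blast
  qed
  have nes: "s j \<noteq> []" for j
  proof -
    have "alg_step V ea er (s j) (s (Suc j))" using step by blast
    then obtain Vs \<delta> rest where "s j = (Vs, \<delta>) # rest" unfolding alg_step_def by blast
    then show ?thesis by simp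
  qed
  have big: "\<forall>a b. split_ok (fst (hd (s j))) a b \<longrightarrow> \<psi>' < dist a b" for j
  proof (intro allI impI)
    fix a b assume sok: "split_ok (fst (hd (s j))) a b"
    show "\<psi>' < dist a b"
    proof (rule ccontr)
      assume "\<not> \<psi>' < dist a b"
      then have le: "dist a b \<le> \<psi>'" by simp
      let ?Vs = "fst (hd (s j))"
      have "hd (s j) \<in> set (s j)" using nes[of j] by simp
      then have lo: "leaf_ok \<Theta> V (hd (s j))" using InvL[of j] unfolding InvL_def by blast
      have a: "a \<in> ?Vs" using sok unfolding split_ok_def by auto
      have aT: "a \<in> \<Theta>" using lo a hull_subset[of ?Vs convex] unfolding leaf_ok_def by blast
      have "?Vs \<subseteq> cball a (dist a b)" using sok a unfolding split_ok_def by (auto simp: mem_cball)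
      then have "convex hull ?Vs \<subseteq> cball a (dist a b)" by (simp add: hull_minimal)
      moreover have "cball a (dist a b) \<subseteq> ecball a ?\<psi>"
      proof
        fix x assume "x \<in> cball a (dist a b)"
        then have "dist a x \<le> \<psi>'" using le by (simp add: mem_cball)
        then have "ereal (dist a x) \<le> ereal \<psi>'" by simp
        then show "x \<in> ecball a ?\<psi>" unfolding ecball_def using order_trans[OF _ p2] by blast
      qed
      ultimately have "convex hull ?Vs \<subseteq> ecball a ?\<psi>" by blast
      then have "\<exists>k \<theta>o. \<theta>o \<in> \<Theta> \<and> convex hull (fst (hd (s k))) \<subseteq> ecball \<theta>o (condnum V ea er \<Theta>)"
        using aT by (intro exI[of _ j] exI[of _ a]) simp
      with H show False by (rule notE)
    qed
  qed
  obtain n where n: "(3/4::real)^n < 1 / (2 * real DIM('p))"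
    using real_arch_pow_inv[of "1 / (2 * real DIM('p))" "3/4"] by auto
  define k where "k = Suc n"
  have k1: "k \<ge> 1" unfolding k_def by simp
  have kc: "real DIM('p) * (3/4)^k \<le> 1/2"
  proof -
    have "(3/4::real)^k \<le> (3/4)^n" unfolding k_def by simp
    then have "(3/4::real)^k \<le> 1 / (2 * real DIM('p))" using n by linarith
    then have "real DIM('p) * (3/4)^k \<le> real DIM('p) * (1 / (2 * real DIM('p)))"
      by (intro mult_left_mono) auto
    then show ?thesis by simp
  qed
  define u where "u j = stack_pot (\<psi>'^(2*k)) k (s j)" for j
  have cls: "u (Suc j) < u j \<or> Repl V ea er (s j) (s (Suc j))" for j
    unfolding u_def using step_class[OF InvL step[rule_format] big p1 k1 kc] .
  have mono: "u (Suc j) \<le> u j" for j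
    using cls[of j] Rep_Phi[of V ea er "s j" "s (Suc j)" "\<psi>'^(2*k)" k] unfolding u_def by linarith
  have ev: "\<exists>K. \<forall>j\<ge>K. Repl V ea er (s j) (s (Suc j))"
  proof (rule ccontr)
    assume "\<not> ?thesis"
    then have inf: "\<forall>K. \<exists>j\<ge>K. u (Suc j) < u j" using cls by blast
    have "\<exists>j. u j + m \<le> u 0" for m
    proof (induction m)
      case 0
      show ?case by (intro exI[of _ 0]) simp
    next
      case (Suc m)
      then obtain j where j: "u j + m \<le> u 0" by blast
      obtain j' where j': "j' \<ge> j" "u (Suc j') < u j'" using inf by blast
      have "u j' \<le> u j" using lift_Suc_antimono_le[of u, OF mono j'(1)] .
      then show ?case using j j' by (intro exI[of _ "Suc j'"]) linarith
    qed
    then obtain j where "u j + Suc (u 0) \<le> u 0" by blast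
    then show False by simp
  qed
  then obtain K where K: "\<forall>j\<ge>K. Repl V ea er (s j) (s (Suc j))" by blast
  define S where "S = fst (hd (s K))"
  define g where "g j = (SUP x\<in>convex hull (fst (hd (s j))). V (snd (hd (s j))) x)" for j
  have same: "fst (hd (s (K + i))) = S" for i
  proof (induction i)
    case 0
    then show ?case unfolding S_def by simp
  next
    case (Suc i)
    have "Repl V ea er (s (K + i)) (s (Suc (K + i)))" using K by simp
    then have "fst (hd (s (Suc (K + i)))) = fst (hd (s (K + i)))" unfolding Repl_def by auto
    then show ?case using Suc by simp
  qed
  have dec: "g (Suc j) < g j" if j: "j \<ge> K" for j
  proof -
    have R1: "Repl V ea er (s j) (s (Suc j))" using K j by simp
    have R2: "Repl V ea er (s (Suc j)) (s (Suc (Suc j)))" using K j by simp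
    obtain Vs \<delta> rest \<theta> \<epsilon> \<delta>s where r1: "s j = (Vs, \<delta>) # rest" "\<not> closes V ea er \<delta> Vs"
      "D_feas V ea er \<delta> Vs \<theta> \<epsilon> \<delta>s" "small_var V ea er \<delta> Vs" "s (Suc j) = (Vs, \<delta>s) # rest"
      using R1 unfolding Repl_def by blast
    obtain Vs2 \<delta>2 rest2 \<theta>2 \<epsilon>2 \<delta>t where r2: "s (Suc j) = (Vs2, \<delta>2) # rest2" "\<not> closes V ea er \<delta>2 Vs2"
      "D_feas V ea er \<delta>2 Vs2 \<theta>2 \<epsilon>2 \<delta>t" "small_var V ea er \<delta>2 Vs2"
      using R2 unfolding Repl_def by blast
    have e: "Vs2 = Vs" "\<delta>2 = \<delta>s" using r1(5) r2(1) by auto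
    have "leaf_ok \<Theta> V (Vs, \<delta>)" using InvL[of j] r1(1) unfolding InvL_def by simp
    then have lo: "finite Vs" "Vs \<noteq> {}" "\<not> affine_dependent Vs" "convex hull Vs \<subseteq> feasset V \<delta>"
      unfolding leaf_ok_def by auto
    have "(SUP x\<in>convex hull Vs. V \<delta>s x) < (SUP x\<in>convex hull Vs. V \<delta> x)"
      using chain[OF nminf lo(1,3,2,4) r1(2,3,4)] r2(2,3,4) unfolding e by blast
    then show ?thesis unfolding g_def using r1(1,5) by simp
  qed
  define h where "h i = g (K + i)" for i
  have hdec: "h (Suc i) < h i" for i unfolding h_def using dec[of "K + i"] by simp
  have inj: "inj h"
  proof (rule injI)
    fix i j assume "h i = h j"
    then show "i = j" using dec_less[of h, OF hdec] by (metis less_irrefl linorder_neqE_nat)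
  qed
  have "range h \<subseteq> (\<lambda>d. SUP x\<in>convex hull S. V d x) ` UNIV"
  proof (rule subsetI)
    fix y assume "y \<in> range h"
    then obtain i where i: "y = h i" by blast
    have "y = (SUP x\<in>convex hull S. V (snd (hd (s (K+i)))) x)"
      unfolding i h_def g_def same[of i] by (rule refl)
    then show "y \<in> (\<lambda>d. SUP x\<in>convex hull S. V d x) ` UNIV" by blast
  qed
  then have "finite (range h)" by (rule finite_subset) simp
  then have "finite (UNIV :: nat set)" using finite_imageD[OF _ inj] by blast
  then show False by simp
qed


theorem lemma4:
  fixes f :: "'p::euclidean_space \<Rightarrow> 'x::euclidean_space \<Rightarrow> ('m::finite \<Rightarrow> bool) \<Rightarrow> real"
    and g :: "'p \<Rightarrow> 'x \<Rightarrow> ('m \<Rightarrow> bool) \<Rightarrow> 'l::euclidean_space"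
    and h :: "'p \<Rightarrow> 'x \<Rightarrow> ('m \<Rightarrow> bool) \<Rightarrow> 'k::euclidean_space"
    and K :: "'k set"
    and \<Theta> :: "'p set"
    and ea er :: real
    and s :: "nat \<Rightarrow> ('p, 'm \<Rightarrow> bool) leaf list"
  assumes cone: "convex_cone K"
    and f_convex: "\<forall>\<delta>. convex_on UNIV (\<lambda>z. f (fst z) (snd z) \<delta>)"
    and g_affine: "\<forall>\<delta>. affine_map (\<lambda>z. g (fst z) (snd z) \<delta>)"
    and h_affine: "\<forall>\<delta>. affine_map (\<lambda>z. h (fst z) (snd z) \<delta>)"
    and V_not_minf: "\<forall>\<delta> \<theta>. Vopt f g h K \<delta> \<theta> \<noteq> -\<infinity>"
    and Theta_sub: "\<Theta> \<subseteq> (\<Union>\<delta>. feasset (Vopt f g h K) \<delta>)"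
    and Theta_polytope: "polytope \<Theta>" "convex \<Theta>"
    and Theta_full: "interior \<Theta> \<noteq> {}"
    and var_exists: "\<forall>\<delta>\<in>Delta (Vopt f g h K) \<Theta>. \<exists>\<sigma>>0. var_prop (Vopt f g h K) ea er \<delta> \<sigma>"
    and overlap_pos: "overlap (Vopt f g h K) ea er \<Theta> > 0"
    and run_init: "init_ok (Vopt f g h K) \<Theta> (s 0)"
    and run_step: "\<forall>k. alg_step (Vopt f g h K) ea er (s k) (s (Suc k))"
  shows "\<exists>k \<theta>o. \<theta>o \<in> \<Theta> \<and>
           convex hull (fst (hd (s k))) \<subseteq> ecball \<theta>o (condnum (Vopt f g h K) ea er \<Theta>)"
  proof -
  have pos: "condnum (Vopt f g h K) ea er \<Theta> > 0" by (rule condnum_pos[OF overlap_pos var_exists])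
  show ?thesis by (rule main_gen[OF V_not_minf pos run_init run_step])
qed

end
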